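(* Let $Y(0),Y(1)$ be integrable real-valued random variables, $\tau=Y(1)-Y(0)$, and $X$ a random vector with support $\mathcal{X}$. Each of the following two conditions implies that for all $x_1,x_2\in\mathcal{X}$, $$E[Y(0)|X=x_1]\geq E[Y(0)|X=x_2]\iff E[Y(1)|X=x_1]\geq E[Y(1)|X=x_2].$$ (a) For all $x_1,x_2\in\mathcal{X}$: $E[Y(0)|X=x_1]\geq E[Y(0)|X=x_2]\implies E[\tau|X=x_1]\geq E[\tau|X=x_2]$. (b) For all $x_1,x_2\in\mathcal{X}$: $|E[\tau|X=x_1]-E[\tau|X=x_2]|\leq|E[Y(0)|X=x_2]-E[Y(0)|X=x_1]|$, with strict inequality whenever the right-hand side is nonzero.
   Context: Conditional expectations $x\mapsto E[\cdot|X=x]$ are fixed functions on $\mathcal{X}$ (e.g. continuous versions), with $E[\tau|X=x]=E[Y(1)|X=x]-E[Y(0)|X=x]$. *)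

theory Defs
  imports "HOL-Probability.Probability"
begin

definition rv_support :: "'w measure \<Rightarrow> ('w \<Rightarrow> 'x::metric_space) \<Rightarrow> 'x set" where
  "rv_support M X = {x. \<forall>e>0. measure M (X -` ball x e \<inter> space M) > 0}"

end

theory Submission
  imports Defs
begin

theorem proposition1:
  fixes M :: "'w measure" and Y0 Y1 :: "'w \<Rightarrow> real"
    and X :: "'w \<Rightarrow> 'x::euclidean_space"
    and m0 m1 mt :: "'x \<Rightarrow> real"
  assumes "prob_space M"
    and "integrable M Y0" and "integrable M Y1"
    and "X \<in> borel_measurable M"
    and "m0 \<in> borel_measurable borel" and "m1 \<in> borel_measurable borel"
    and "AE \<omega> in M. m0 (X \<omega>) = real_cond_exp M (vimage_algebra (space M) X borel) Y0 \<omega>"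
    and "AE \<omega> in M. m1 (X \<omega>) = real_cond_exp M (vimage_algebra (space M) X borel) Y1 \<omega>"
    and "\<And>x. mt x = m1 x - m0 x"
  shows "((\<forall>x1\<in>rv_support M X. \<forall>x2\<in>rv_support M X. m0 x1 \<ge> m0 x2 \<longrightarrow> mt x1 \<ge> mt x2)
            \<longrightarrow> (\<forall>x1\<in>rv_support M X. \<forall>x2\<in>rv_support M X. m0 x1 \<ge> m0 x2 \<longleftrightarrow> m1 x1 \<ge> m1 x2))
       \<and> ((\<forall>x1\<in>rv_support M X. \<forall>x2\<in>rv_support M X.
              \<bar>mt x1 - mt x2\<bar> \<le> \<bar>m0 x2 - m0 x1\<bar>
              \<and> (\<bar>m0 x2 - m0 x1\<bar> \<noteq> 0 \<longrightarrow> \<bar>mt x1 - mt x2\<bar> < \<bar>m0 x2 - m0 x1\<bar>))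
            \<longrightarrow> (\<forall>x1\<in>rv_support M X. \<forall>x2\<in>rv_support M X. m0 x1 \<ge> m0 x2 \<longleftrightarrow> m1 x1 \<ge> m1 x2))"
proof (intro conjI impI ballI)
  fix x1 x2 assume H: "\<forall>x1\<in>rv_support M X. \<forall>x2\<in>rv_support M X. m0 x1 \<ge> m0 x2 \<longrightarrow> mt x1 \<ge> mt x2"
    and a: "x1 \<in> rv_support M X" and b: "x2 \<in> rv_support M X"
  have h1: "m0 x1 \<ge> m0 x2 \<longrightarrow> mt x1 \<ge> mt x2" using H a b by blast
  have h2: "m0 x2 \<ge> m0 x1 \<longrightarrow> mt x2 \<ge> mt x1" using H a b by blast
  show "m0 x1 \<ge> m0 x2 \<longleftrightarrow> m1 x1 \<ge> m1 x2" using h1 h2 assms(9)[of x1] assms(9)[of x2] by linarith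
next
  fix x1 x2 assume H: "\<forall>x1\<in>rv_support M X. \<forall>x2\<in>rv_support M X.
              \<bar>mt x1 - mt x2\<bar> \<le> \<bar>m0 x2 - m0 x1\<bar>
              \<and> (\<bar>m0 x2 - m0 x1\<bar> \<noteq> 0 \<longrightarrow> \<bar>mt x1 - mt x2\<bar> < \<bar>m0 x2 - m0 x1\<bar>)"
    and a: "x1 \<in> rv_support M X" and b: "x2 \<in> rv_support M X"
  have h: "\<bar>mt x1 - mt x2\<bar> \<le> \<bar>m0 x2 - m0 x1\<bar>
              \<and> (\<bar>m0 x2 - m0 x1\<bar> \<noteq> 0 \<longrightarrow> \<bar>mt x1 - mt x2\<bar> < \<bar>m0 x2 - m0 x1\<bar>)" using H a b by blast
  show "m0 x1 \<ge> m0 x2 \<longleftrightarrow> m1 x1 \<ge> m1 x2" using h assms(9)[of x1] assms(9)[of x2] by (auto simp: abs_if split: if_splits)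
qed

end
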